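(* Let $A\subset\mathbb{Z}^d$ be finite with $\mathbb{Z}$-linear span $\mathbb{Z}^d$, $f=\bigoplus_{i\in A}p_i\odot w^i$ a tropical polynomial with support $A$, and $q\in\mathcal{T}(f)$ a point lying in the relative interior of a cell $\sigma^*$ of $\mathcal{T}(f)$ whose dual marked cell $\sigma$ is a pyramid. Then $q$ is not a singular point of $\mathcal{T}(f)$. In particular, if the marked coherent subdivision $\Pi_p$ is a triangulation, then $\mathcal{T}(f)$ is non-singular.
   Context: $\mathbb{K}$ is an algebraically closed field of characteristic $0$ with a rank-one non-archimedean valuation $val$ whose residue field has characteristic $0$. Tropical operations $\oplus=\min$, $\odot=+$; $f(w)=\min_{i\in A}(p_i+\langle i,w\rangle)$, all $p_i\in\mathbb{R}$; $\mathcal{T}(f)$ is the set of $w$ where this minimum is attained for at least two distinct $i$. A point $q\in\mathcal{T}(f)$ is singular if there exist $F=\sum_{i\in A}a_ix^i$ over $\mathbb{K}$ with $val(a_i)=p_i$ for all $i$ and $b\in(\mathbb{K}^* )^d$ with $val(b)=q$ such that $F(b)=0$ and all $\partial F/\partial x_j(b)=0$; $\mathcal{T}(f)$ is non-singular if it has no singular point. For $q\in\mathbb{R}^d$ let $\sigma_q=\{i\in A: p_i+\langle i,q\rangle=f(q)\}$. The marked coherent subdivision $\Pi_p$ of the convex hull of $A$ is the collection of the sets $\sigma_q$, $q\in\mathbb{R}^d$ (its marked cells). For a marked cell $\sigma$, its dual cell $\sigma^*$ is the closure of $\{q:\sigma_q=\sigma\}$, and $q$ lies in the relative interior of $\sigma^*$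 iff $\sigma_q=\sigma$. A finite set $\sigma\subset\mathbb{R}^d$ is a pyramid if some $i\in\sigma$ does not lie in the affine span of $\sigma\setminus\{i\}$. $\Pi_p$ is a triangulation if every marked cell is affinely independent. *)

theory Defs
  imports "HOL-Analysis.Analysis" "HOL-Computational_Algebra.Polynomial"
begin

text \<open>A rank-one non-archimedean valuation on a field: a real-valued map defined
on nonzero elements (its value at 0 is irrelevant and plays the role of +infinity).\<close>
definition rank_one_nonarch_valuation :: "('k::field \<Rightarrow> real) \<Rightarrow> bool" where
  "rank_one_nonarch_valuation val \<longleftrightarrow>
     (\<forall>x y. x \<noteq> 0 \<longrightarrow> y \<noteq> 0 \<longrightarrow> val (x * y) = val x + val y) \<and>
     (\<forall>x y. x \<noteq> 0 \<longrightarrow> y \<noteq> 0 \<longrightarrow> x + y \<noteq> 0 \<longrightarrow> val (x + y) \<ge> min (val x) (val y))"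

definition alg_closed_field :: "'k::field itself \<Rightarrow> bool" where
  "alg_closed_field _ \<longleftrightarrow> (\<forall>P :: 'k poly. degree P > 0 \<longrightarrow> (\<exists>x. poly P x = 0))"

definition val_ring :: "('k::field \<Rightarrow> real) \<Rightarrow> 'k set" where
  "val_ring val = {x. x = 0 \<or> val x \<ge> 0}"

definition val_max_ideal :: "('k::field \<Rightarrow> real) \<Rightarrow> 'k set" where
  "val_max_ideal val = {x. x = 0 \<or> val x > 0}"

text \<open>The residue field has characteristic 0: n * 1 is nonzero in the residue field
for every positive integer n, i.e. n * 1 does not lie in the maximal ideal.\<close>
definition residue_char_zero :: "('k::field \<Rightarrow> real) \<Rightarrow> bool" where
  "residue_char_zero val \<longleftrightarrow> (\<forall>n::nat. n > 0 \<longrightarrow> (of_nat n :: 'k) \<notin> val_max_ideal val)"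

definition emb :: "int^'d \<Rightarrow> real^'d" where
  "emb i = (\<chi> j. real_of_int (i $ j))"

definition int_span :: "(int^'d) set \<Rightarrow> (int^'d) set" where
  "int_span A = {v. \<exists>c :: int^'d \<Rightarrow> int. v = (\<Sum>i\<in>A. c i *s i)}"

definition trop_eval :: "(int^'d) set \<Rightarrow> (int^'d \<Rightarrow> real) \<Rightarrow> real^'d \<Rightarrow> real" where
  "trop_eval A p w = Min ((\<lambda>i. p i + emb i \<bullet> w) ` A)"

definition sigma_cell :: "(int^'d) set \<Rightarrow> (int^'d \<Rightarrow> real) \<Rightarrow> real^'d \<Rightarrow> (int^'d) set" where
  "sigma_cell A p q = {i\<in>A. p i + emb i \<bullet> q = trop_eval A p q}"

definition trop_hypersurface :: "(int^'d) set \<Rightarrow> (int^'d \<Rightarrow> real) \<Rightarrow> (real^'d) set" where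
  "trop_hypersurface A p = {w. \<exists>i\<in>A. \<exists>j\<in>A. i \<noteq> j \<and>
      p i + emb i \<bullet> w = trop_eval A p w \<and> p j + emb j \<bullet> w = trop_eval A p w}"

definition marked_cells :: "(int^'d) set \<Rightarrow> (int^'d \<Rightarrow> real) \<Rightarrow> (int^'d) set set" where
  "marked_cells A p = range (sigma_cell A p)"

definition is_pyramid :: "(int^'d) set \<Rightarrow> bool" where
  "is_pyramid \<sigma> \<longleftrightarrow> (\<exists>i\<in>\<sigma>. emb i \<notin> affine hull (emb ` (\<sigma> - {i})))"

definition is_triangulation :: "(int^'d) set \<Rightarrow> (int^'d \<Rightarrow> real) \<Rightarrow> bool" where
  "is_triangulation A p \<longleftrightarrow> (\<forall>\<sigma>\<in>marked_cells A p. \<not> affine_dependent (emb ` \<sigma>))"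

definition mono_eval :: "'k::field^'d \<Rightarrow> int^'d \<Rightarrow> 'k" where
  "mono_eval b i = (\<Prod>j\<in>UNIV. (b $ j) powi (i $ j))"

definition lpoly_eval :: "(int^'d) set \<Rightarrow> (int^'d \<Rightarrow> 'k::field) \<Rightarrow> 'k^'d \<Rightarrow> 'k" where
  "lpoly_eval A a b = (\<Sum>i\<in>A. a i * mono_eval b i)"

definition lpoly_deriv_eval :: "(int^'d) set \<Rightarrow> (int^'d \<Rightarrow> 'k::field) \<Rightarrow> 'd \<Rightarrow> 'k^'d \<Rightarrow> 'k" where
  "lpoly_deriv_eval A a j b = (\<Sum>i\<in>A. a i * of_int (i $ j) * mono_eval b (i - axis j 1))"

definition trop_singular_point ::
  "('k::field \<Rightarrow> real) \<Rightarrow> (int^'d) set \<Rightarrow> (int^'d \<Rightarrow> real) \<Rightarrow> real^'d \<Rightarrow> bool" where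
  "trop_singular_point val A p q \<longleftrightarrow> q \<in> trop_hypersurface A p \<and>
     (\<exists>(a :: int^'d \<Rightarrow> 'k) (b :: 'k^'d).
        (\<forall>i\<in>A. a i \<noteq> 0 \<and> val (a i) = p i) \<and>
        (\<forall>j. b $ j \<noteq> 0 \<and> val (b $ j) = q $ j) \<and>
        lpoly_eval A a b = 0 \<and>
        (\<forall>j. lpoly_deriv_eval A a j b = 0))"

definition trop_nonsingular ::
  "('k::field \<Rightarrow> real) \<Rightarrow> (int^'d) set \<Rightarrow> (int^'d \<Rightarrow> real) \<Rightarrow> bool" where
  "trop_nonsingular val A p \<longleftrightarrow> (\<forall>q\<in>trop_hypersurface A p. \<not> trop_singular_point val A p q)"

end

theory Submission
  imports Defs
begin

lemma clear_denoms:
  fixes uq :: "rat^'d"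
  shows "\<exists>D::int. D > 0 \<and> (\<forall>j. \<exists>z::int. of_int D * uq$j = of_int z)"
proof -
  define D where "D = (\<Prod>j\<in>UNIV. snd (quotient_of (uq$j)))"
  have D0: "D > 0" unfolding D_def by (intro prod_pos) (simp add: quotient_of_denom_pos')
  have "\<exists>z::int. of_int D * uq$j = of_int z" for j
  proof -
    obtain n e where ne: "quotient_of (uq$j) = (n,e)" by (cases "quotient_of (uq$j)")
    have e0: "e > 0" using quotient_of_denom_pos[OF ne] .
    have "e dvd D" unfolding D_def using ne by (metis UNIV_I dvd_prodI finite snd_conv)
    then obtain c where c: "D = e * c" by (auto elim: dvdE)
    have "of_int D * uq$j = of_int (n*c)"
      using quotient_of_div[OF ne] e0 c by simp
    then show ?thesis by blast
  qed
  then show ?thesis using D0 by blast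
qed

lemma rat_functional:
  fixes W :: "(int^'d) set" and v :: "int^'d"
  assumes nin: "emb v \<notin> span (emb ` W)"
  shows "\<exists>u::int^'d. (\<forall>w\<in>W. (\<Sum>j\<in>UNIV. u$j * w$j) = 0) \<and> (\<Sum>j\<in>UNIV. u$j * v$j) \<noteq> 0"
proof -
  define rq :: "int^'d \<Rightarrow> rat^'d" where "rq x = (\<chi> j. of_int (x$j))" for x
  have nq: "rq v \<notin> vec.span (rq ` W)"
  proof
    assume "rq v \<in> vec.span (rq ` W)"
    then obtain t r where t: "finite t" "t \<subseteq> rq ` W" and eq: "rq v = (\<Sum>a\<in>t. r a *s a)"
      unfolding vec.span_explicit by blast
    have "emb v = (\<Sum>a\<in>t. of_rat (r a) *\<^sub>R (\<chi> j. of_rat (a$j)))"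
    proof (subst vec_eq_iff, intro allI)
      fix j
      have "real_of_int (v$j) = of_rat ((rq v)$j)" by (simp add: rq_def)
      also have "\<dots> = (\<Sum>a\<in>t. of_rat (r a) * of_rat (a$j))"
        by (simp add: eq sum_component of_rat_sum of_rat_mult)
      finally show "emb v $ j = (\<Sum>a\<in>t. of_rat (r a) *\<^sub>R (\<chi> j. (of_rat (a$j)::real))) $ j"
        by (simp add: emb_def sum_component)
    qed
    also have "\<dots> \<in> span (emb ` W)"
    proof (intro span_sum span_scale span_base)
      fix a assume "a \<in> t"
      then obtain w where "w \<in> W" "a = rq w" using t by auto
      then have "(\<chi> j. of_rat (a$j)) = emb w" by (simp add: rq_def emb_def)
      then show "(\<chi> j. of_rat (a$j)) \<in> emb ` W" using \<open>w \<in> W\<close> by auto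
    qed
    finally show False using nin by simp
  qed
  obtain B where B: "B \<subseteq> rq ` W" "vec.independent B" "rq ` W \<subseteq> vec.span B"
    using vec.maximal_independent_subset by metis
  have "vec.span B \<subseteq> vec.span (rq ` W)" using B(1) by (rule vec.span_mono)
  then have "rq v \<notin> vec.span B" using nq by blast
  then have ind: "vec.independent (insert (rq v) B)" using B(2) by (rule vec.independent_insertI)
  obtain g where g: "Vector_Spaces.linear (*s) (*s) g"
    "\<forall>x\<in>insert (rq v) B. g x = (if x = rq v then (1::rat^'d) else 0)"
    using vec.linear_independent_extend[OF ind, of "\<lambda>x. if x = rq v then (1::rat^'d) else 0"] by blast
  have gB: "g x = 0" if "x \<in> B" for x using g(2) that \<open>rq v \<notin> vec.span B\<close> vec.span_base by fastforce
  have gW: "g x = 0" if "x \<in> rq ` W" for x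
    using vec.linear_eq_0_on_span[OF g(1), of B x] gB B(3) that by blast
  have gv: "g (rq v) = 1" using g(2) by simp
  define k where "k = (undefined::'d)"
  define uq where "uq = matrix g $ k"
  have gk: "g x $ k = (\<Sum>j\<in>UNIV. uq$j * x$j)" for x
    using matrix_works[OF g(1), of x] by (simp add: uq_def matrix_vector_mult_def vec_eq_iff)
  obtain D where D: "D > 0" "\<forall>j. \<exists>z::int. of_int D * uq$j = of_int z"
    using clear_denoms by blast
  then obtain zf where zf: "\<And>j. of_int D * uq$j = of_int (zf j)" by metis
  define u where "u = (\<chi> j. zf j)"
  have key: "of_int (\<Sum>j\<in>UNIV. u$j * x$j) = of_int D * g (rq x) $ k" for x
    by (simp add: gk u_def rq_def sum_distrib_left zf[symmetric] mult.assoc)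
  show ?thesis
  proof (intro exI conjI ballI)
    fix w assume "w \<in> W"
    then have "g (rq w) = 0" using gW by blast
    then have "(of_int (\<Sum>j\<in>UNIV. u$j * w$j) :: rat) = 0" using key by simp
    then show "(\<Sum>j\<in>UNIV. u$j * w$j) = 0" by (metis of_int_eq_0_iff)
  next
    have "(of_int (\<Sum>j\<in>UNIV. u$j * v$j) :: rat) = of_int D" using key[of v] gv by simp
    then show "(\<Sum>j\<in>UNIV. u$j * v$j) \<noteq> 0" using D(1) by (metis of_int_eq_iff less_irrefl)
  qed
qed

context
  fixes val :: "'k::field_char_0 \<Rightarrow> real"
  assumes V: "rank_one_nonarch_valuation val"
begin

lemma vmult: "x \<noteq> 0 \<Longrightarrow> y \<noteq> 0 \<Longrightarrow> val (x * y) = val x + val y"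
  using V unfolding rank_one_nonarch_valuation_def by blast

lemma vadd: "x \<noteq> 0 \<Longrightarrow> y \<noteq> 0 \<Longrightarrow> x + y \<noteq> 0 \<Longrightarrow> val (x + y) \<ge> min (val x) (val y)"
  using V unfolding rank_one_nonarch_valuation_def by blast

lemma vone: "val 1 = 0"
  using vmult[of 1 1] by simp

lemma vinv: "x \<noteq> 0 \<Longrightarrow> val (inverse x) = - val x"
  using vmult[of x "inverse x"] vone by simp

lemma vpow: "x \<noteq> 0 \<Longrightarrow> val (x ^ n) = real n * val x"
  by (induction n) (auto simp: vone vmult algebra_simps)

lemma vpowi: "x \<noteq> 0 \<Longrightarrow> val (x powi n) = of_int n * val x"
  by (auto simp: power_int_def vpow vinv)

lemma vprod: "finite S \<Longrightarrow> (\<forall>i\<in>S. f i \<noteq> 0) \<Longrightarrow> val (prod f S) = (\<Sum>i\<in>S. val (f i))"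
  by (induction S rule: finite_induct) (auto simp: vone vmult)

lemma vminus: "val (- x) = val x"
proof (cases "x = 0")
  case False
  have "val ((-1) * (-1)) = 0" using vone by simp
  then have "val (-1::'k) = 0" using vmult[of "-1" "-1"] by simp
  then show ?thesis using vmult[of "-1" x] False by simp
qed simp

lemma vnat: "n > 0 \<Longrightarrow> val (of_nat n :: 'k) \<ge> 0"
proof (induction n)
  case (Suc n)
  show ?case
  proof (cases "n = 0")
    case True then show ?thesis using vone by simp
  next
    case False
    have ne: "(of_nat n + 1 :: 'k) \<noteq> 0"
    proof -
      have "(of_nat (Suc n)::'k) \<noteq> 0" by (simp only: of_nat_eq_0_iff)
      then show ?thesis by (simp add: add.commute)
    qed
    have n0: "(of_nat n :: 'k) \<noteq> 0" using False by simp
    have "val (of_nat n + 1 :: 'k) \<ge> min (val (of_nat n :: 'k)) (val 1)"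
      by (rule vadd[OF n0 _ ne]) simp
    moreover have "(of_nat (Suc n) :: 'k) = of_nat n + 1" by simp
    moreover have "val (of_nat n :: 'k) \<ge> 0" using Suc.IH False by simp
    ultimately show ?thesis using vone by (simp only:)
  qed
qed simp

lemma vint: "n \<noteq> 0 \<Longrightarrow> val (of_int n :: 'k) \<ge> 0"
proof (cases "n \<ge> 0")
  case True
  assume "n \<noteq> 0"
  then have "nat n > 0" using True by simp
  moreover have "(of_int n :: 'k) = of_nat (nat n)" using True by simp
  ultimately show ?thesis using vnat[of "nat n"] by (simp only:)
next
  case False
  then have "nat (-n) > 0" by simp
  moreover have "(of_int n :: 'k) = - of_nat (nat (-n))" using False by simp
  ultimately show ?thesis using vnat[of "nat (-n)"] vminus by (simp only:)
qed

lemma vint_res: "residue_char_zero val \<Longrightarrow> n \<noteq> 0 \<Longrightarrow> val (of_int n :: 'k) = 0"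
proof -
  assume R: "residue_char_zero val" and n: "n \<noteq> 0"
  have "(of_nat (nat \<bar>n\<bar>) :: 'k) \<notin> val_max_ideal val"
  proof -
    have "nat \<bar>n\<bar> > 0" using n by simp
    then show ?thesis using R unfolding residue_char_zero_def by blast
  qed
  then have le: "val (of_nat (nat \<bar>n\<bar>) :: 'k) \<le> 0"
    unfolding val_max_ideal_def by simp
  have ge: "val (of_int n :: 'k) \<ge> 0" using vint[OF n] .
  show ?thesis
  proof (cases "n \<ge> 0")
    case True
    then have "(of_int n :: 'k) = of_nat (nat \<bar>n\<bar>)" by simp
    then show ?thesis using le ge by (simp only:)
  next
    case False
    then have "(of_int n :: 'k) = - of_nat (nat \<bar>n\<bar>)" by simp
    then show ?thesis using le ge vminus by (simp only:)
  qed
qed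

lemma vsum_gt: "finite S \<Longrightarrow> (\<forall>i\<in>S. t i = 0 \<or> val (t i) > m) \<Longrightarrow> sum t S = 0 \<or> val (sum t S) > m"
proof (induction S rule: finite_induct)
  case (insert x F)
  then have h: "sum t F = 0 \<or> val (sum t F) > m" "t x = 0 \<or> val (t x) > m" by auto
  have s: "sum t (insert x F) = t x + sum t F" using insert.hyps by simp
  show ?case
  proof (cases "t x = 0 \<or> sum t F = 0 \<or> t x + sum t F = 0")
    case True then show ?thesis using h unfolding s by auto
  next
    case False
    then have "val (t x + sum t F) \<ge> min (val (t x)) (val (sum t F))" by (intro vadd) auto
    then show ?thesis using h False unfolding s by linarith
  qed
qed simp

end


lemma mono_shift:
  assumes b: "\<forall>k. b$k \<noteq> 0"
  shows "mono_eval b (i - axis j 1) * b$j = mono_eval b (i::int^'d)"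
proof -
  define f where "f k = b$k powi ((i - axis j 1)$k)" for k
  define g where "g k = b$k powi (i$k)" for k
  have 1: "prod f UNIV = f j * prod f (UNIV-{j})" by (simp add: prod.remove)
  have 2: "prod g UNIV = g j * prod g (UNIV-{j})" by (simp add: prod.remove)
  have 3: "prod f (UNIV-{j}) = prod g (UNIV-{j})" by (rule prod.cong) (auto simp: f_def g_def axis_def)
  have "f j * b$j = b$j powi (i$j - 1 + 1)"
    unfolding f_def using b by (subst power_int_add_1) (auto simp: axis_def)
  then have 4: "f j * b$j = g j" by (simp add: g_def)
  have "mono_eval b (i - axis j 1) * b$j = prod f UNIV * b$j" by (simp add: mono_eval_def f_def)
  also have "\<dots> = g j * prod g (UNIV-{j})" using 1 3 4 by (simp add: algebra_simps)
  also have "\<dots> = mono_eval b i" using 2 by (simp add: mono_eval_def g_def)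
  finally show ?thesis .
qed

lemma mono_nz: "\<forall>k. b$k \<noteq> 0 \<Longrightarrow> mono_eval b i \<noteq> (0::'k::field)"
  unfolding mono_eval_def by (auto simp: power_int_not_zero)

lemma euler:
  assumes b: "\<forall>k. b$k \<noteq> 0" and d: "lpoly_deriv_eval A a j b = 0"
  shows "(\<Sum>i\<in>A. a i * of_int (i$j) * mono_eval b i) = (0::'k::field)"
proof -
  have "(\<Sum>i\<in>A. a i * of_int (i$j) * mono_eval b i)
      = (\<Sum>i\<in>A. a i * of_int (i$j) * (mono_eval b (i - axis j 1) * b$j))"
    using mono_shift[OF b] by simp
  also have "\<dots> = lpoly_deriv_eval A a j b * b$j"
    by (simp add: lpoly_deriv_eval_def sum_distrib_right mult.assoc)
  finally show ?thesis using d by simp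
qed

lemma comb:
  assumes b: "\<forall>k. b$k \<noteq> 0" and e: "lpoly_eval A a b = 0" and d: "\<forall>j. lpoly_deriv_eval A a j b = 0"
  shows "(\<Sum>i\<in>A. a i * of_int (c + (\<Sum>j\<in>UNIV. u$j * i$j)) * mono_eval b i) = (0::'k::field)"
proof -
  have "(\<Sum>i\<in>A. a i * of_int (c + (\<Sum>j\<in>UNIV. u$j * i$j)) * mono_eval b i)
     = (\<Sum>i\<in>A. of_int c * (a i * mono_eval b i) + (\<Sum>j\<in>UNIV. of_int (u$j) * (a i * of_int (i$j) * mono_eval b i)))"
    by (rule sum.cong) (simp_all add: algebra_simps sum_distrib_left sum_distrib_right)
  also have "\<dots> = of_int c * lpoly_eval A a b + (\<Sum>j\<in>UNIV. of_int (u$j) * (\<Sum>i\<in>A. a i * of_int (i$j) * mono_eval b i))"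
    by (simp add: sum.distrib lpoly_eval_def sum_distrib_left sum.swap[of _ UNIV A])
  also have "\<dots> = 0" using e euler[OF b] d by simp
  finally show ?thesis .
qed


lemma emb_diff: "emb (x - y) = emb x - emb y"
  by (simp add: emb_def vec_eq_iff)

lemma affine_functional:
  fixes S :: "(int^'d) set" and i0 :: "int^'d"
  assumes nin: "emb i0 \<notin> affine hull (emb ` S)"
  shows "\<exists>c u. (\<forall>s\<in>S. c + (\<Sum>j\<in>UNIV. u$j * s$j) = 0) \<and> c + (\<Sum>j\<in>UNIV. u$j * i0$j) \<noteq> 0"
proof (cases "S = {}")
  case True
  then show ?thesis by (intro exI[of _ 1] exI[of _ 0]) simp
next
  case False
  then obtain s0 where s0: "s0 \<in> S" by blast
  define W where "W = (\<lambda>s. s - s0) ` S"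
  define v where "v = i0 - s0"
  define T where "T = (\<lambda>x. - emb s0 + x) ` (emb ` S - {emb s0})"
  have ah: "affine hull (emb ` S) = (\<lambda>x. emb s0 + x) ` span T"
    unfolding T_def by (rule affine_hull_span2) (use s0 in auto)
  have sub: "emb ` W \<subseteq> span T"
  proof
    fix y assume "y \<in> emb ` W"
    then obtain s where s: "s \<in> S" "y = emb s - emb s0" by (auto simp: W_def emb_diff)
    show "y \<in> span T"
    proof (cases "emb s = emb s0")
      case True then show ?thesis using s span_zero by simp
    next
      case False
      then have "y \<in> T" using s unfolding T_def by auto
      then show ?thesis by (rule span_base)
    qed
  qed
  have "emb v \<notin> span (emb ` W)"
  proof
    assume "emb v \<in> span (emb ` W)"
    then have "emb v \<in> span T" using span_minimal[OF sub subspace_span] by blast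
    then have "emb s0 + emb v \<in> affine hull (emb ` S)" unfolding ah by blast
    moreover have "emb s0 + emb v = emb i0" by (simp add: v_def emb_diff)
    ultimately show False using nin by simp
  qed
  then obtain u where u: "\<forall>w\<in>W. (\<Sum>j\<in>UNIV. u$j * w$j) = 0" "(\<Sum>j\<in>UNIV. u$j * v$j) \<noteq> 0"
    using rat_functional by blast
  have eq: "(\<Sum>j\<in>UNIV. u$j * (x - s0)$j) = - (\<Sum>j\<in>UNIV. u$j * s0$j) + (\<Sum>j\<in>UNIV. u$j * x$j)" for x
    by (simp add: right_diff_distrib sum_subtractf)
  have "\<forall>s\<in>S. - (\<Sum>j\<in>UNIV. u$j * s0$j) + (\<Sum>j\<in>UNIV. u$j * s$j) = 0"
  proof
    fix s assume "s \<in> S"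
    then have "(\<Sum>j\<in>UNIV. u$j * (s - s0)$j) = 0" using u(1) unfolding W_def by blast
    then show "- (\<Sum>j\<in>UNIV. u$j * s0$j) + (\<Sum>j\<in>UNIV. u$j * s$j) = 0" unfolding eq .
  qed
  moreover have "- (\<Sum>j\<in>UNIV. u$j * s0$j) + (\<Sum>j\<in>UNIV. u$j * i0$j) \<noteq> 0"
    using u(2) unfolding v_def eq .
  ultimately show ?thesis by blast
qed


lemma pyramid_nonsing:
  fixes val :: "'k::field_char_0 \<Rightarrow> real"
    and A :: "(int^'d) set" and p :: "int^'d \<Rightarrow> real"
  assumes V: "rank_one_nonarch_valuation val"
    and R: "residue_char_zero val"
    and fin: "finite A"
    and pyr: "is_pyramid (sigma_cell A p q)"
  shows "\<not> trop_singular_point val A p q"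
proof
  assume sing: "trop_singular_point val A p q"
  define \<sigma> where "\<sigma> = sigma_cell A p q"
  define m where "m = trop_eval A p q"
  obtain i0 where i0: "i0 \<in> \<sigma>" "emb i0 \<notin> affine hull (emb ` (\<sigma> - {i0}))"
    using pyr unfolding is_pyramid_def \<sigma>_def by blast
  obtain c u where cu: "\<forall>s\<in>\<sigma> - {i0}. c + (\<Sum>j\<in>UNIV. u$j * s$j) = 0"
      "c + (\<Sum>j\<in>UNIV. u$j * i0$j) \<noteq> 0"
    using affine_functional[OF i0(2)] by blast
  define l where "l i = c + (\<Sum>j\<in>UNIV. u$j * i$j)" for i :: "int^'d"
  obtain a :: "int^'d \<Rightarrow> 'k" and b :: "'k^'d" where
    a: "\<forall>i\<in>A. a i \<noteq> 0 \<and> val (a i) = p i" and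
    b: "\<forall>j. b $ j \<noteq> 0 \<and> val (b $ j) = q $ j" and
    e: "lpoly_eval A a b = 0" and d: "\<forall>j. lpoly_deriv_eval A a j b = 0"
    using sing unfolding trop_singular_point_def by blast
  have bnz: "\<forall>k. b$k \<noteq> 0" using b by blast
  define t where "t i = a i * of_int (l i) * mono_eval b i" for i
  have sumt: "sum t A = 0" unfolding t_def l_def using comb[OF bnz e d] .
  have vmono: "val (mono_eval b i) = emb i \<bullet> q" for i
  proof -
    have "val (mono_eval b i) = (\<Sum>j\<in>UNIV. val (b$j powi (i$j)))"
      unfolding mono_eval_def by (rule vprod[OF V]) (auto simp: bnz power_int_not_zero)
    also have "\<dots> = (\<Sum>j\<in>UNIV. of_int (i$j) * q$j)"
      using vpowi[OF V] b by simp
    finally show ?thesis by (simp add: inner_vec_def emb_def)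
  qed
  have \<sigma>A: "\<sigma> \<subseteq> A" unfolding \<sigma>_def sigma_cell_def by blast
  have ge: "p i + emb i \<bullet> q \<ge> m" if "i \<in> A" for i
    unfolding m_def trop_eval_def using fin that by (intro Min_le) auto
  have gt: "p i + emb i \<bullet> q > m" if "i \<in> A" "i \<notin> \<sigma>" for i
    using ge[OF that(1)] that unfolding \<sigma>_def sigma_cell_def m_def by force
  have eq0: "p i0 + emb i0 \<bullet> q = m" using i0(1) unfolding \<sigma>_def sigma_cell_def m_def by blast
  have vt: "val (t i) = p i + val (of_int (l i) :: 'k) + emb i \<bullet> q" and tnz: "t i \<noteq> 0"
    if "i \<in> A" "l i \<noteq> 0" for i
  proof -
    have nz: "a i \<noteq> 0" "(of_int (l i) :: 'k) \<noteq> 0" "mono_eval b i \<noteq> 0"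
      using a that mono_nz[OF bnz] by auto
    show "t i \<noteq> 0" unfolding t_def using nz by simp
    show "val (t i) = p i + val (of_int (l i) :: 'k) + emb i \<bullet> q"
      unfolding t_def using nz a that vmono vmult[OF V] by simp
  qed
  have i0A: "i0 \<in> A" using i0(1) \<sigma>A by blast
  have li0: "l i0 \<noteq> 0" using cu(2) unfolding l_def .
  have rest: "\<forall>i\<in>A - {i0}. t i = 0 \<or> val (t i) > m"
  proof
    fix i assume i: "i \<in> A - {i0}"
    show "t i = 0 \<or> val (t i) > m"
    proof (cases "l i = 0")
      case True then show ?thesis by (simp add: t_def)
    next
      case False
      then have "i \<notin> \<sigma>" using cu(1) i unfolding l_def by auto
      then have "p i + emb i \<bullet> q > m" using gt i by blast
      moreover have "val (of_int (l i) :: 'k) \<ge> 0" using vint[OF V False] .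
      ultimately show ?thesis using vt[of i] i False by auto
    qed
  qed
  define Rs where "Rs = sum t (A - {i0})"
  have Rs: "Rs = 0 \<or> val Rs > m" unfolding Rs_def using vsum_gt[OF V _ rest] fin by blast
  have "sum t A = t i0 + Rs" unfolding Rs_def using fin i0A by (simp add: sum.remove)
  then have "Rs = - t i0" using sumt by (simp add: eq_neg_iff_add_eq_0 add.commute)
  moreover have "t i0 \<noteq> 0" using tnz[OF i0A li0] .
  moreover have "val (t i0) = m" using vt[OF i0A li0] vint_res[OF V R li0] eq0 by simp
  ultimately show False using Rs vminus[OF V, of "t i0"] by auto
qed

theorem lemma3p1:
  fixes val :: "'k::field_char_0 \<Rightarrow> real"
    and A :: "(int^'d) set" and p :: "int^'d \<Rightarrow> real"
  assumes "alg_closed_field TYPE('k)"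
    and "rank_one_nonarch_valuation val"
    and "residue_char_zero val"
    and "finite A"
    and "int_span A = UNIV"
  shows "(\<forall>q \<in> trop_hypersurface A p. is_pyramid (sigma_cell A p q)
             \<longrightarrow> \<not> trop_singular_point val A p q)
       \<and> (is_triangulation A p \<longrightarrow> trop_nonsingular val A p)"
proof (intro conjI ballI impI)
  fix q assume "is_pyramid (sigma_cell A p q)"
  then show "\<not> trop_singular_point val A p q"
    using pyramid_nonsing assms(2-4) by blast
next
  assume tri: "is_triangulation A p"
  have inj: "inj emb" unfolding inj_def emb_def by (simp add: vec_eq_iff)
  show "trop_nonsingular val A p"
    unfolding trop_nonsingular_def
  proof (intro ballI)
    fix q assume q: "q \<in> trop_hypersurface A p"
    then obtain i where i: "i \<in> sigma_cell A p q"
      unfolding trop_hypersurface_def sigma_cell_def by blast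
    have "sigma_cell A p q \<in> marked_cells A p" unfolding marked_cells_def by blast
    then have "\<not> affine_dependent (emb ` sigma_cell A p q)" using tri unfolding is_triangulation_def by blast
    then have "emb i \<notin> affine hull (emb ` sigma_cell A p q - {emb i})"
      unfolding affine_dependent_def using i by blast
    moreover have "emb ` sigma_cell A p q - {emb i} = emb ` (sigma_cell A p q - {i})"
      using inj by (auto dest: injD)
    ultimately have "is_pyramid (sigma_cell A p q)" unfolding is_pyramid_def using i by auto
    then show "\<not> trop_singular_point val A p q"
      using pyramid_nonsing assms(2-4) by blast
  qed
qed

end
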